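(* Let $h$ be a penalty function on $\Delta$ and let $p$ lie in the relative interior of $\Delta$. If $F_h(p,y_j)$ is bounded for a sequence $y_j\in\mathbb{R}^n$, then $y_{j,\alpha}-y_{j,\beta}$ is bounded for all $\alpha,\beta\in\{1,\dots,n\}$.
   Context: $\Delta$ is the unit simplex of $\mathbb{R}^n$. A penalty function on $\Delta$ is $h:\Delta\to\mathbb{R}$, continuous, $C^\infty$ on the relative interior of every face of $\Delta$, and strongly convex: $h(tx_1+(1-t)x_2)\le th(x_1)+(1-t)h(x_2)-\tfrac12Kt(1-t)\|x_1-x_2\|^2$ for some $K>0$. $h^*(y)=\max_{x\in\Delta}\{\langle y,x\rangle-h(x)\}$; Fenchel coupling $F_h(p,y)=h(p)+h^*(y)-\langle y,p\rangle$. *)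

theory Defs
  imports "HOL-Analysis.Analysis"
begin

definition unit_simplex :: "(real ^ 'n) set" where
  "unit_simplex = {x. (\<forall>i. 0 \<le> x $ i) \<and> (\<Sum>i\<in>UNIV. x $ i) = 1}"

text \<open>C-infinity on a set S (relative to S): all iterated directional derivatives
  along directions parallel to S (i.e. in span of S - S) exist (relative to S)
  and are continuous on S.\<close>
definition smooth_rel :: "(real ^ 'n) set \<Rightarrow> (real ^ 'n \<Rightarrow> real) \<Rightarrow> bool" where
  "smooth_rel S f \<longleftrightarrow>
     (\<exists>G. f \<in> G \<and>
        (\<forall>g\<in>G. continuous_on S g \<and> (\<forall>x\<in>S. g differentiable (at x within S)) \<and>
           (\<forall>v\<in>span {a - b | a b. a \<in> S \<and> b \<in> S}.
               (\<lambda>x. frechet_derivative g (at x within S) v) \<in> G)))"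

definition strongly_convex_on :: "(real ^ 'n) set \<Rightarrow> (real ^ 'n \<Rightarrow> real) \<Rightarrow> bool" where
  "strongly_convex_on S h \<longleftrightarrow>
     (\<exists>K>0. \<forall>x1\<in>S. \<forall>x2\<in>S. \<forall>t\<in>{0..1}.
        h (t *\<^sub>R x1 + (1 - t) *\<^sub>R x2)
          \<le> t * h x1 + (1 - t) * h x2 - 1/2 * K * t * (1 - t) * (norm (x1 - x2))\<^sup>2)"

definition penalty_function :: "(real ^ 'n \<Rightarrow> real) \<Rightarrow> bool" where
  "penalty_function h \<longleftrightarrow>
     continuous_on unit_simplex h \<and>
     (\<forall>F. F face_of unit_simplex \<longrightarrow> smooth_rel (rel_interior F) h) \<and>
     strongly_convex_on unit_simplex h"

definition conj_simplex :: "(real ^ 'n \<Rightarrow> real) \<Rightarrow> real ^ 'n \<Rightarrow> real" where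
  "conj_simplex h y = (SUP x\<in>unit_simplex. y \<bullet> x - h x)"

definition fenchel_coupling :: "(real ^ 'n \<Rightarrow> real) \<Rightarrow> real ^ 'n \<Rightarrow> real ^ 'n \<Rightarrow> real" where
  "fenchel_coupling h p y = h p + conj_simplex h y - y \<bullet> p"

end

theory Submission
  imports Defs
begin

lemma simplex_norm: "x \<in> unit_simplex \<Longrightarrow> norm x \<le> 1"
proof -
  assume x: "x \<in> unit_simplex"
  have "norm x \<le> (\<Sum>i\<in>UNIV. \<bar>x$i\<bar>)" by (rule norm_le_l1_cart)
  also have "\<dots> = (\<Sum>i\<in>UNIV. x$i)" using x by (simp add: unit_simplex_def)
  also have "\<dots> = 1" using x by (simp add: unit_simplex_def)
  finally show ?thesis .
qed

lemma simplex_compact: "compact (unit_simplex :: (real^'n) set)"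
proof -
  have e: "unit_simplex = (\<Inter>i. {x::real^'n. 0 \<le> x $ i}) \<inter> {x. (\<Sum>i\<in>UNIV. x $ i) = 1}"
    unfolding unit_simplex_def by auto
  have c1: "closed {x::real^'n. (\<Sum>i\<in>UNIV. x $ i) = 1}"
    by (intro closed_Collect_eq continuous_on_sum continuous_on_const continuous_on_component continuous_on_id)
  have c2: "closed (\<Inter>i. {x::real^'n. 0 \<le> x $ i})"
    by (intro closed_INT allI ballI closed_Collect_le continuous_on_const continuous_on_component continuous_on_id)
  have c: "closed (unit_simplex :: (real^'n) set)"
    unfolding e using c1 c2 by (metis closed_Int)
  have "bounded (unit_simplex :: (real^'n) set)"
    unfolding bounded_iff using simplex_norm by blast
  with c show ?thesis by (simp add: compact_eq_bounded_closed)
qed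

lemma axis_simplex: "(axis i 1 :: real^'n) \<in> unit_simplex"
proof -
  have "(\<Sum>j\<in>UNIV. (axis i 1 :: real^'n) $ j) = 1"
    by (simp add: axis_def)
  then show ?thesis by (auto simp: unit_simplex_def axis_def)
qed

lemma one_side:
  fixes h :: "real ^ 'n \<Rightarrow> real" and p :: "real ^ 'n" and y :: "nat \<Rightarrow> real ^ 'n"
  assumes M: "\<And>x. x \<in> unit_simplex \<Longrightarrow> \<bar>h x\<bar> \<le> M"
    and p: "p \<in> rel_interior unit_simplex"
    and B: "\<And>j. fenchel_coupling h p (y j) \<le> B"
  shows "\<exists>t>0. \<forall>j. t * (y j $ a - y j $ b) \<le> B + 2 * M"
proof -
  obtain e where e: "e > 0" "ball p e \<inter> affine hull unit_simplex \<subseteq> unit_simplex"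
    and pS: "p \<in> unit_simplex"
    using p unfolding rel_interior_ball by blast
  define t where "t = e / 4"
  have t: "t > 0" using e by (simp add: t_def)
  define q where "q = p + t *\<^sub>R (axis a 1 - axis b 1 :: real^'n)"
  have "q \<in> affine hull unit_simplex"
    unfolding q_def
    by (intro mem_affine_3_minus affine_affine_hull hull_inc pS axis_simplex)
  moreover have "q \<in> ball p e"
  proof -
    have "norm (axis a 1 - axis b 1 :: real^'n) \<le> norm (axis a 1 :: real^'n) + norm (axis b 1 :: real^'n)"
      by (rule norm_triangle_ineq4)
    also have "\<dots> = 2" by simp
    finally have "norm (q - p) \<le> t * 2" using t by (simp add: q_def)
    then show ?thesis using e t by (simp add: dist_norm t_def norm_minus_commute)
  qed
  ultimately have qS: "q \<in> unit_simplex" using e by blast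
  have "\<forall>j. t * (y j $ a - y j $ b) \<le> B + 2 * M"
  proof
    fix j
    have bdd: "bdd_above ((\<lambda>x. y j \<bullet> x - h x) ` unit_simplex)"
    proof (rule bdd_aboveI2)
      fix x assume x: "x \<in> (unit_simplex :: (real^'n) set)"
      have "y j \<bullet> x \<le> norm (y j) * norm x" by (rule norm_cauchy_schwarz)
      also have "\<dots> \<le> norm (y j)" using simplex_norm[OF x]
        by (simp add: mult_left_le)
      finally show "y j \<bullet> x - h x \<le> norm (y j) + M" using M[OF x] by linarith
    qed
    have "y j \<bullet> q - h q \<le> conj_simplex h (y j)"
      unfolding conj_simplex_def by (rule cSUP_upper[OF qS bdd])
    moreover have "y j \<bullet> q = y j \<bullet> p + t * (y j $ a - y j $ b)"
      by (simp add: q_def inner_add_right inner_diff_right inner_axis)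
    ultimately have "h p + y j \<bullet> p + t * (y j $ a - y j $ b) - h q - y j \<bullet> p \<le> fenchel_coupling h p (y j)"
      unfolding fenchel_coupling_def by linarith
    then show "t * (y j $ a - y j $ b) \<le> B + 2 * M"
      using B[of j] M[OF qS] M[OF pS] by linarith
  qed
  then show ?thesis using t by blast
qed

theorem propositionC5:
  fixes h :: "real ^ 'n \<Rightarrow> real" and p :: "real ^ 'n" and y :: "nat \<Rightarrow> real ^ 'n"
  assumes "penalty_function h"
    and "p \<in> rel_interior unit_simplex"
    and "bounded (range (\<lambda>j. fenchel_coupling h p (y j)))"
  shows "\<forall>\<alpha> \<beta>. bounded (range (\<lambda>j. y j $ \<alpha> - y j $ \<beta>))"
proof (intro allI)
  fix a b
  have "continuous_on unit_simplex h" using assms(1) by (simp add: penalty_function_def)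
  then have "compact (h ` unit_simplex)"
    using compact_continuous_image simplex_compact by blast
  then have "bounded (h ` unit_simplex)" by (rule compact_imp_bounded)
  then obtain M where M0: "\<forall>x\<in>h ` unit_simplex. \<bar>x\<bar> \<le> M"
    unfolding bounded_real by blast
  have M: "\<And>x. x \<in> unit_simplex \<Longrightarrow> \<bar>h x\<bar> \<le> M" using M0 by blast
  obtain B where B0: "\<forall>x\<in>range (\<lambda>j. fenchel_coupling h p (y j)). \<bar>x\<bar> \<le> B"
    using assms(3) unfolding bounded_real by blast
  have B: "\<And>j. \<bar>fenchel_coupling h p (y j)\<bar> \<le> B" using B0 by blast
  have B': "\<And>j. fenchel_coupling h p (y j) \<le> B" using B abs_le_D1 by blast
  obtain t1 where t1: "t1 > 0" "\<forall>j. t1 * (y j $ a - y j $ b) \<le> B + 2 * M"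
  proof -
    have "\<exists>t>0. \<forall>j. t * (y j $ a - y j $ b) \<le> B + 2 * M"
      by (rule one_side[of h M p y B]) (fact M, fact assms(2), fact B')
    then show thesis using that by blast
  qed
  obtain t2 where t2: "t2 > 0" "\<forall>j. t2 * (y j $ b - y j $ a) \<le> B + 2 * M"
  proof -
    have "\<exists>t>0. \<forall>j. t * (y j $ b - y j $ a) \<le> B + 2 * M"
      by (rule one_side[of h M p y B]) (fact M, fact assms(2), fact B')
    then show thesis using that by blast
  qed
  have "\<forall>j. \<bar>y j $ a - y j $ b\<bar> \<le> (B + 2 * M) / t1 + (B + 2 * M) / t2"
  proof
    fix j
    have 1: "y j $ a - y j $ b \<le> (B + 2 * M) / t1" using t1 by (simp add: field_simps)
    have 2: "y j $ b - y j $ a \<le> (B + 2 * M) / t2" using t2 by (simp add: field_simps)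
    have "0 \<le> B + 2*M" using B[of j] M[OF axis_simplex[of a]] by linarith
    then have "0 \<le> (B + 2*M)/t1" "0 \<le> (B + 2*M)/t2" using t1 t2 by simp_all
    then show "\<bar>y j $ a - y j $ b\<bar> \<le> (B + 2 * M) / t1 + (B + 2 * M) / t2"
      using 1 2 by linarith
  qed
  then show "bounded (range (\<lambda>j. y j $ a - y j $ b))"
    unfolding bounded_real by blast
qed

end
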